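(* Let $U\subset\mathbb{R}^d$ be open and let $F,G:U\times[0,\infty)\to\mathbb{R}$ be, respectively, upper and lower semicontinuous. Assume that for a fixed $C>0$ and all $(x,t)\in U\times[0,\infty)$, $F(x,t)\le Ct$ and $G(x,t)\ge-Ct$, and that $\min(F_t,F)\le0$ and $\max(G_t,G)\ge0$ in the viscosity sense (in $U\times(0,\infty)$). Then $F\le0$ and $G\ge0$ on $U\times[0,\infty)$.
   Context: $\min(F_t,F)\le0$ in the viscosity sense means: whenever $\psi$ is smooth near a point $(x_0,t_0)$ (and Lipschitz elsewhere) and $F-\psi$ attains a (global) maximum value $0$ at $(x_0,t_0)$, then $F(x_0,t_0)\le0$ or $\psi_t(x_0,t_0)\le0$. $\max(G_t,G)\ge0$ in the viscosity sense means: whenever $\psi$ is such a test function and $G-\psi$ attains a (global) minimum value $0$ at $(x_0,t_0)$, then $G(x_0,t_0)\ge0$ or $\psi_t(x_0,t_0)\ge0$. *)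

theory Defs
  imports "HOL-Analysis.Analysis"
begin

definition upper_semicontinuous_on :: "'a::topological_space set \<Rightarrow> ('a \<Rightarrow> real) \<Rightarrow> bool" where
  "upper_semicontinuous_on S f \<longleftrightarrow>
     (\<forall>x\<in>S. \<forall>a. f x < a \<longrightarrow> (\<forall>\<^sub>F y in at x within S. f y < a))"

definition lower_semicontinuous_on :: "'a::topological_space set \<Rightarrow> ('a \<Rightarrow> real) \<Rightarrow> bool" where
  "lower_semicontinuous_on S f \<longleftrightarrow>
     (\<forall>x\<in>S. \<forall>a. a < f x \<longrightarrow> (\<forall>\<^sub>F y in at x within S. a < f y))"

definition pderiv_dir :: "'a::euclidean_space \<Rightarrow> ('a \<Rightarrow> real) \<Rightarrow> 'a \<Rightarrow> real" where
  "pderiv_dir v f x = deriv (\<lambda>s. f (x + s *\<^sub>R v)) 0"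

fun iter_pderiv :: "'a::euclidean_space list \<Rightarrow> ('a \<Rightarrow> real) \<Rightarrow> 'a \<Rightarrow> real" where
  "iter_pderiv [] f = f"
| "iter_pderiv (v # vs) f = pderiv_dir v (iter_pderiv vs f)"

definition smooth_on :: "'a::euclidean_space set \<Rightarrow> ('a \<Rightarrow> real) \<Rightarrow> bool" where
  "smooth_on N f \<longleftrightarrow>
     (\<forall>vs. set vs \<subseteq> Basis \<longrightarrow>
        continuous_on N (iter_pderiv vs f) \<and>
        (\<forall>v\<in>Basis. \<forall>x\<in>N. (\<lambda>s. iter_pderiv vs f (x + s *\<^sub>R v)) differentiable (at 0)))"

definition test_fun :: "('a::euclidean_space) set \<Rightarrow> 'a \<Rightarrow> ('a \<Rightarrow> real) \<Rightarrow> bool" where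
  "test_fun D p \<psi> \<longleftrightarrow>
     (\<exists>N. open N \<and> p \<in> N \<and> smooth_on N \<psi> \<and> (\<exists>L. L-lipschitz_on (D - N) \<psi>))"

definition visc_min_sub :: "(real^'d) set \<Rightarrow> (real^'d \<Rightarrow> real \<Rightarrow> real) \<Rightarrow> bool" where
  "visc_min_sub U F \<longleftrightarrow>
     (\<forall>x0 t0 \<psi>. x0 \<in> U \<longrightarrow> 0 < t0 \<longrightarrow> test_fun (U \<times> {0..}) (x0, t0) \<psi> \<longrightarrow>
        (\<forall>x\<in>U. \<forall>t\<ge>0. F x t - \<psi> (x, t) \<le> 0) \<longrightarrow> F x0 t0 - \<psi> (x0, t0) = 0 \<longrightarrow>
        F x0 t0 \<le> 0 \<or> deriv (\<lambda>s. \<psi> (x0, s)) t0 \<le> 0)"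

definition visc_max_super :: "(real^'d) set \<Rightarrow> (real^'d \<Rightarrow> real \<Rightarrow> real) \<Rightarrow> bool" where
  "visc_max_super U G \<longleftrightarrow>
     (\<forall>x0 t0 \<psi>. x0 \<in> U \<longrightarrow> 0 < t0 \<longrightarrow> test_fun (U \<times> {0..}) (x0, t0) \<psi> \<longrightarrow>
        (\<forall>x\<in>U. \<forall>t\<ge>0. G x t - \<psi> (x, t) \<ge> 0) \<longrightarrow> G x0 t0 - \<psi> (x0, t0) = 0 \<longrightarrow>
        G x0 t0 \<ge> 0 \<or> deriv (\<lambda>s. \<psi> (x0, s)) t0 \<ge> 0)"

end

theory Submission imports Defs begin

definition quad :: "real \<Rightarrow> ('a::real_inner \<times> real) \<Rightarrow> real \<Rightarrow> real \<Rightarrow> ('a \<times> real) \<Rightarrow> real" where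
  "quad c w b k z = c + inner w z + b * (snd z)^2 + k * inner (fst z) (fst z)"

lemma quad_eq: "quad c w b k (z + s *\<^sub>R v) =
   quad c w b k z + s * (inner w v + 2*b* snd z* snd v + 2*k*inner (fst z) (fst v))
   + s^2 * (b*(snd v)^2 + k*inner (fst v) (fst v))"
  by (simp add: quad_def inner_add_left inner_add_right algebra_simps power2_eq_square inner_commute)

lemma quad_deriv: "((\<lambda>s. quad c w b k (z + s *\<^sub>R v)) has_real_derivative
   ((inner w v + 2*b* snd z* snd v + 2*k*inner (fst z) (fst v))
   + 2 * s * (b*(snd v)^2 + k*inner (fst v) (fst v)))) (at s)"
  unfolding quad_eq
  by (auto intro!: derivative_eq_intros)

lemma quad_pderiv: "pderiv_dir v (quad c w b k) = quad (inner w v) ((2*k) *\<^sub>R fst v, 2*b* snd v) 0 0"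
proof
  fix z
  have "pderiv_dir v (quad c w b k) z = inner w v + 2*b* snd z* snd v + 2*k*inner (fst z) (fst v)"
    unfolding pderiv_dir_def
    by (rule DERIV_imp_deriv) (use quad_deriv[of c w b k z v 0] in simp)
  also have "\<dots> = quad (inner w v) ((2*k) *\<^sub>R fst v, 2*b* snd v) 0 0 z"
    by (simp add: quad_def inner_prod_def inner_commute algebra_simps)
  finally show "pderiv_dir v (quad c w b k) z = quad (inner w v) ((2*k) *\<^sub>R fst v, 2*b* snd v) 0 0 z" .
qed

lemma iter_quad: "\<exists>c' w' b' k'. iter_pderiv vs (quad c w b k) = quad c' w' b' k'"
proof (induction vs)
  case Nil then show ?case unfolding iter_pderiv.simps by (intro exI) (rule refl)
next
  case (Cons v vs)
  then obtain c' w' b' k' where e: "iter_pderiv vs (quad c w b k) = quad c' w' b' k'" by blast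
  show ?case unfolding iter_pderiv.simps e quad_pderiv by (intro exI) (rule refl)
qed

lemma quad_cont: "continuous_on S (quad c w b k)"
  unfolding quad_def by (intro continuous_intros)

lemma smooth_quad: "smooth_on N (quad c w b k)"
  unfolding smooth_on_def
proof (intro allI impI conjI ballI)
  fix vs :: "('a::euclidean_space \<times> real) list"
  obtain c' w' b' k' where e: "iter_pderiv vs (quad c w b k) = quad c' w' b' k'" using iter_quad by blast
  show "continuous_on N (iter_pderiv vs (quad c w b k))" unfolding e by (rule quad_cont)
  fix v x
  show "(\<lambda>s. iter_pderiv vs (quad c w b k) (x + s *\<^sub>R v)) differentiable at 0"
    unfolding e using quad_deriv[of c' w' b' k' x v 0] real_differentiable_def by blast
qed

lemma test_quad: "test_fun D p (quad c w b k)"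
  unfolding test_fun_def
  by (rule exI[of _ UNIV]) (auto simp: smooth_quad lipschitz_on_def intro: exI[of _ 0])

lemma quad_tderiv: "deriv (\<lambda>s. quad c w b k (x0, s)) t0 = snd w + 2*b*t0"
proof (rule DERIV_imp_deriv)
  have e: "(\<lambda>s. quad c w b k (x0, s)) = (\<lambda>s. c + inner (fst w) x0 + snd w * s + b * s^2 + k * inner x0 x0)"
    by (auto simp: quad_def inner_prod_def algebra_simps)
  show "((\<lambda>s. quad c w b k (x0, s)) has_real_derivative snd w + 2*b*t0) (at t0)"
    unfolding e by (auto intro!: derivative_eq_intros)
qed

lemma quad_neg: "quad (-c) (-w) (-b) (-k) z = - quad c w b k z"
  by (simp add: quad_def)

lemma usc_diff:
  fixes f g :: "'a::metric_space \<Rightarrow> real"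
  assumes "\<forall>z\<in>K. \<forall>a. f z < a \<longrightarrow> (\<forall>\<^sub>F y in at z within S. f y < a)"
    and "continuous_on UNIV g"
  shows "\<forall>z\<in>K. \<forall>a. f z - g z < a \<longrightarrow> (\<forall>\<^sub>F y in at z within S. f y - g y < a)"
proof (intro ballI allI impI)
  fix z a assume z: "z \<in> K" and lt: "f z - g z < a"
  define e where "e = (a - f z + g z) / 2"
  have e: "e > 0" using lt by (simp add: e_def)
  have ev1: "\<forall>\<^sub>F y in at z within S. f y < f z + e" using assms(1) z e by auto
  have "isCont g z" using assms(2) by (simp add: continuous_on_eq_continuous_at)
  then have "(g \<longlongrightarrow> g z) (at z)" by (simp add: isCont_def)
  then have "(g \<longlongrightarrow> g z) (at z within S)" by (rule tendsto_mono[OF at_le, rotated]) simp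
  then have ev2: "\<forall>\<^sub>F y in at z within S. g z - e < g y" using e by (intro order_tendstoD(1)) auto
  show "\<forall>\<^sub>F y in at z within S. f y - g y < a"
    using ev1 ev2 by eventually_elim (simp add: e_def field_simps)
qed

lemma usc_attains_max:
  fixes h :: "'a::topological_space \<Rightarrow> real"
  assumes K: "compact K" "K \<noteq> {}"
    and usc: "\<forall>z\<in>K. \<forall>a. h z < a \<longrightarrow> (\<forall>\<^sub>F y in at z within K. h y < a)"
    and bdd: "bdd_above (h ` K)"
  shows "\<exists>z\<in>K. \<forall>y\<in>K. h y \<le> h z"
proof (rule ccontr)
  assume nex: "\<not> ?thesis"
  define s where "s = Sup (h ` K)"
  have lt: "h z < s" if "z \<in> K" for z
  proof -
    have "\<exists>y\<in>K. h z < h y" using nex that by (meson not_le)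
    then obtain y where "y \<in> K" "h z < h y" by blast
    moreover have "h y \<le> s" unfolding s_def using bdd \<open>y \<in> K\<close> by (intro cSup_upper) auto
    ultimately show ?thesis by simp
  qed
  have "\<forall>z\<in>K. \<exists>V. open V \<and> z \<in> V \<and> (\<forall>y\<in>V \<inter> K. h y < (h z + s) / 2)"
  proof
    fix z assume z: "z \<in> K"
    have "h z < (h z + s) / 2" using lt[OF z] by simp
    then have "\<forall>\<^sub>F y in at z within K. h y < (h z + s) / 2" using usc z by blast
    then obtain V where V: "open V" "z \<in> V" "\<forall>y\<in>V. y \<noteq> z \<longrightarrow> y \<in> K \<longrightarrow> h y < (h z + s) / 2"
      unfolding eventually_at_topological by blast
    show "\<exists>V. open V \<and> z \<in> V \<and> (\<forall>y\<in>V \<inter> K. h y < (h z + s) / 2)"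
      using V lt[OF z] by (intro exI[of _ V]) auto
  qed
  then obtain V where V: "\<And>z. z \<in> K \<Longrightarrow> open (V z) \<and> z \<in> V z \<and> (\<forall>y\<in>V z \<inter> K. h y < (h z + s) / 2)"
    by metis
  obtain C' where C': "C' \<subseteq> K" "finite C'" "K \<subseteq> (\<Union>c\<in>C'. V c)"
    using compactE_image[OF K(1), of K V] V by blast
  have "C' \<noteq> {}" using C'(3) K(2) by auto
  define M where "M = Max ((\<lambda>z. (h z + s) / 2) ` C')"
  have Mlt: "M < s"
  proof -
    have "M \<in> (\<lambda>z. (h z + s) / 2) ` C'" unfolding M_def using C' \<open>C' \<noteq> {}\<close> by (intro Max_in) auto
    then obtain z where "z \<in> C'" "M = (h z + s) / 2" by auto
    then show ?thesis using lt[of z] C' by auto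
  qed
  have hM: "h y < M" if yK: "y \<in> K" for y
  proof -
    obtain c where c: "c \<in> C'" "y \<in> V c" using C'(3) yK by auto
    have "h y < (h c + s) / 2" using V[of c] c C'(1) yK by auto
    also have "\<dots> \<le> M" unfolding M_def using C' c by (intro Max_ge) auto
    finally show ?thesis .
  qed
  have "M < Sup (h ` K)" using Mlt s_def by simp
  then obtain y where "y \<in> K" "M < h y" using less_cSup_iff[of "h ` K" M] bdd K(2) by auto
  then show False using hM by fastforce
qed

lemma main_F:
  fixes U :: "(real^'d) set" and F :: "real^'d \<Rightarrow> real \<Rightarrow> real" and C :: real
  assumes U: "open U" and usc: "upper_semicontinuous_on (U \<times> {0..}) (\<lambda>(x, t). F x t)"
    and C: "C > 0" and bnd: "\<And>x t. x \<in> U \<Longrightarrow> t \<ge> 0 \<Longrightarrow> F x t \<le> C * t"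
    and H: "\<And>x0 t0 c w b k. x0 \<in> U \<Longrightarrow> 0 < t0 \<Longrightarrow>
       (\<forall>x\<in>U. \<forall>t\<ge>0. F x t \<le> quad c w b k (x, t)) \<Longrightarrow> F x0 t0 = quad c w b k (x0, t0) \<Longrightarrow>
       F x0 t0 \<le> 0 \<or> snd w + 2 * b * t0 \<le> 0"
    and x0: "x0 \<in> U" and t0: "t0 \<ge> 0"
  shows "F x0 t0 \<le> 0"
proof (rule ccontr)
  assume "\<not> ?thesis"
  then have dpos: "F x0 t0 > 0" by simp
  define \<delta> where "\<delta> = F x0 t0"
  have t0pos: "t0 > 0"
  proof (rule ccontr)
    assume "\<not> t0 > 0" then have "t0 = 0" using t0 by simp
    then show False using bnd[OF x0 t0] dpos by simp
  qed
  obtain r where r: "r > 0" "cball x0 r \<subseteq> U" using open_contains_cball U x0 by blast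
  define \<beta> where "\<beta> = \<delta> / (2 * t0^2)"
  have \<beta>: "\<beta> > 0" using dpos t0pos by (simp add: \<beta>_def \<delta>_def)
  define T where "T = max t0 (C / \<beta>)"
  have T: "T \<ge> t0" "T \<ge> C / \<beta>" "T > 0" using t0pos by (auto simp: T_def)
  define K where "K = C * T / r^2"
  have K: "K \<ge> 0" "K * r^2 = C * T" using C T r by (auto simp: K_def)
  define g where "g = (\<lambda>z::((real^'d) \<times> real). \<beta> * (snd z)^2 + K * ((fst z - x0) \<bullet> (fst z - x0)))"
  have g0: "g z \<ge> 0" for z using \<beta> K unfolding g_def by simp
  define \<Phi> where "\<Phi> = (\<lambda>z. F (fst z) (snd z) - g z)"
  define Kc where "Kc = cball x0 r \<times> {0..T}"
  have out: "\<Phi> (x, t) \<le> 0" if xt: "x \<in> U" "t \<ge> 0" "(x, t) \<notin> Kc" for x t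
  proof (cases "t > T")
    case True
    have "C \<le> \<beta> * T" using T(2) \<beta> by (simp add: field_simps)
    also have "\<dots> \<le> \<beta> * t" using True \<beta> by simp
    finally have "C \<le> \<beta> * t" .
    then have "C * t \<le> \<beta> * t * t" using xt(2) by (intro mult_right_mono) auto
    moreover have "\<beta> * t^2 \<le> g (x, t)" using K unfolding g_def by simp
    ultimately show ?thesis using bnd[OF xt(1,2)] unfolding \<Phi>_def by (simp add: power2_eq_square)
  next
    case False
    then have "dist x0 x > r" using xt by (auto simp: Kc_def)
    then have "r^2 \<le> (dist x0 x)^2" using r by (intro power_mono) auto
    also have "\<dots> = (x - x0) \<bullet> (x - x0)" by (simp add: dist_norm power2_norm_eq_inner inner_diff_left inner_diff_right inner_commute)
    finally have "K * r^2 \<le> K * ((x - x0) \<bullet> (x - x0))" using K by (intro mult_left_mono) auto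
    moreover have "0 \<le> \<beta> * t^2" using \<beta> by simp
    ultimately have "C * T \<le> g (x, t)" using K unfolding g_def by simp
    moreover have "C * t \<le> C * T" using False C by simp
    ultimately show ?thesis using bnd[OF xt(1,2)] unfolding \<Phi>_def by simp
  qed
  have KcD: "Kc \<subseteq> U \<times> {0..}" using r unfolding Kc_def by auto
  have p0: "(x0, t0) \<in> Kc" using T t0 r unfolding Kc_def by auto
  have Phi0: "\<Phi> (x0, t0) = \<delta> / 2"
    using t0pos unfolding \<Phi>_def g_def \<beta>_def \<delta>_def by (simp add: field_simps power2_eq_square)
  have gc: "continuous_on UNIV g" unfolding g_def by (intro continuous_intros)
  have usc1: "\<forall>z\<in>Kc. \<forall>a. F (fst z) (snd z) < a \<longrightarrow> (\<forall>\<^sub>F y in at z within (U \<times> {0..}). F (fst y) (snd y) < a)"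
    using usc KcD unfolding upper_semicontinuous_on_def by (auto simp: case_prod_beta)
  have usc2: "\<forall>z\<in>Kc. \<forall>a. \<Phi> z < a \<longrightarrow> (\<forall>\<^sub>F y in at z within Kc. \<Phi> y < a)"
  proof (intro ballI allI impI)
    fix z a assume "z \<in> Kc" "\<Phi> z < a"
    then have "\<forall>\<^sub>F y in at z within (U \<times> {0..}). \<Phi> y < a"
      using usc_diff[OF usc1 gc] unfolding \<Phi>_def by blast
    then show "\<forall>\<^sub>F y in at z within Kc. \<Phi> y < a"
      by (rule filter_leD[OF at_le[OF KcD]])
  qed
  have bdd: "bdd_above (\<Phi> ` Kc)"
  proof (rule bdd_aboveI2)
    fix z assume z: "z \<in> Kc"
    then have "F (fst z) (snd z) \<le> C * snd z" using KcD by (intro bnd) auto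
    also have "\<dots> \<le> C * T" using z C unfolding Kc_def by auto
    finally show "\<Phi> z \<le> C * T" using g0[of z] unfolding \<Phi>_def by simp
  qed
  have "compact Kc" unfolding Kc_def by (intro compact_Times compact_cball compact_Icc)
  then obtain p where p: "p \<in> Kc" "\<And>y. y \<in> Kc \<Longrightarrow> \<Phi> y \<le> \<Phi> p"
    using usc_attains_max[OF _ _ usc2 bdd] p0 by blast
  define m where "m = \<Phi> p"
  have mpos: "m > 0" using p(2)[OF p0] Phi0 dpos unfolding m_def \<delta>_def by simp
  have glob: "\<Phi> (x, t) \<le> m" if "x \<in> U" "t \<ge> 0" for x t
    using out[OF that] p(2)[of "(x, t)"] mpos unfolding m_def by (cases "(x, t) \<in> Kc") auto
  obtain x1 t1 where p1: "p = (x1, t1)" by (cases p)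
  have x1: "x1 \<in> U" "t1 \<ge> 0" using p(1) KcD p1 by auto
  have t1: "t1 > 0"
  proof (rule ccontr)
    assume "\<not> t1 > 0" then have "t1 = 0" using x1 by simp
    then have "\<Phi> p \<le> 0" using bnd[OF x1] g0[of p] unfolding \<Phi>_def p1 by simp
    then show False using mpos m_def by simp
  qed
  define c where "c = m + K * (x0 \<bullet> x0)"
  define w where "w = ((- 2 * K) *\<^sub>R x0, 0::real)"
  have qeq: "quad c w \<beta> K z = m + g z" for z
    by (simp add: quad_def c_def w_def g_def inner_prod_def inner_diff_left inner_diff_right
        inner_commute algebra_simps)
  have A: "\<forall>x\<in>U. \<forall>t\<ge>0. F x t \<le> quad c w \<beta> K (x, t)"
    using glob unfolding qeq \<Phi>_def by (auto simp: algebra_simps)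
  have B: "F x1 t1 = quad c w \<beta> K (x1, t1)"
    unfolding qeq m_def \<Phi>_def p1 by simp
  have "F x1 t1 > 0" using B qeq[of "(x1, t1)"] g0[of "(x1, t1)"] mpos by simp
  moreover have "snd w + 2 * \<beta> * t1 > 0" using \<beta> t1 by (simp add: w_def)
  ultimately show False using H[OF x1(1) t1 A B] by simp
qed

theorem lemma3p3:
  fixes U :: "(real^'d) set" and F G :: "real^'d \<Rightarrow> real \<Rightarrow> real" and C :: real
  assumes "open U"
    and "upper_semicontinuous_on (U \<times> {0..}) (\<lambda>(x, t). F x t)"
    and "lower_semicontinuous_on (U \<times> {0..}) (\<lambda>(x, t). G x t)"
    and "C > 0"
    and "\<And>x t. x \<in> U \<Longrightarrow> t \<ge> 0 \<Longrightarrow> F x t \<le> C * t"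
    and "\<And>x t. x \<in> U \<Longrightarrow> t \<ge> 0 \<Longrightarrow> G x t \<ge> - C * t"
    and "visc_min_sub U F"
    and "visc_max_super U G"
  shows "\<forall>x\<in>U. \<forall>t\<ge>0. F x t \<le> 0 \<and> G x t \<ge> 0"
proof (intro ballI allI impI conjI)
  fix x t assume xt: "x \<in> U" "(t::real) \<ge> 0"
  show "F x t \<le> 0"
  proof (rule main_F[OF assms(1,2,4,5) _ xt])
    fix x0 t0 c w b k
    assume h: "x0 \<in> U" "(0::real) < t0" "\<forall>x\<in>U. \<forall>t\<ge>0. F x t \<le> quad c w b k (x, t)"
      "F x0 t0 = quad c w b k (x0, t0)"
    have "F x0 t0 \<le> 0 \<or> deriv (\<lambda>s. quad c w b k (x0, s)) t0 \<le> 0"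
      by (rule assms(7)[unfolded visc_min_sub_def, rule_format, OF h(1) h(2) test_quad]) (use h(3,4) in auto)
    then show "F x0 t0 \<le> 0 \<or> snd w + 2 * b * t0 \<le> 0" by (simp add: quad_tderiv)
  qed
  have usc: "upper_semicontinuous_on (U \<times> {0..}) (\<lambda>(x, t). - G x t)"
    unfolding upper_semicontinuous_on_def
  proof (intro ballI allI impI)
    fix z a assume z: "z \<in> U \<times> {0..}" and lt: "(case z of (x, t) \<Rightarrow> - G x t) < a"
    have "- a < (\<lambda>(x, t). G x t) z" using lt by (simp add: case_prod_beta)
    then have "\<forall>\<^sub>F y in at z within U \<times> {0..}. - a < (\<lambda>(x, t). G x t) y"
      using assms(3) z unfolding lower_semicontinuous_on_def by blast
    then show "\<forall>\<^sub>F y in at z within U \<times> {0..}. (case y of (x, t) \<Rightarrow> - G x t) < a"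
      by eventually_elim (simp add: case_prod_beta)
  qed
  have "- G x t \<le> 0"
  proof (rule main_F[OF assms(1) usc assms(4) _ _ xt])
    fix x t assume "x \<in> U" "(t::real) \<ge> 0"
    then show "- G x t \<le> C * t" using assms(6) by fastforce
  next
    fix x0 t0 c w b k
    assume h: "x0 \<in> U" "(0::real) < t0" "\<forall>x\<in>U. \<forall>t\<ge>0. - G x t \<le> quad c w b k (x, t)"
      "- G x0 t0 = quad c w b k (x0, t0)"
    have h3: "\<forall>x\<in>U. \<forall>t\<ge>0. G x t - quad (-c) (-w) (-b) (-k) (x, t) \<ge> 0"
    proof (intro ballI allI impI)
      fix x t assume "x \<in> U" "(t::real) \<ge> 0"
      then have "- G x t \<le> quad c w b k (x, t)" using h(3) by blast
      then show "G x t - quad (-c) (-w) (-b) (-k) (x, t) \<ge> 0" by (simp add: quad_neg)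
    qed
    have h4: "G x0 t0 - quad (-c) (-w) (-b) (-k) (x0, t0) = 0" using h(4) by (simp add: quad_neg)
    have "G x0 t0 \<ge> 0 \<or> deriv (\<lambda>s. quad (-c) (-w) (-b) (-k) (x0, s)) t0 \<ge> 0"
      by (rule assms(8)[unfolded visc_max_super_def, rule_format, OF h(1) h(2) test_quad]) (use h3 h4 in auto)
    then show "- G x0 t0 \<le> 0 \<or> snd w + 2 * b * t0 \<le> 0" by (simp add: quad_tderiv) linarith
  qed
  then show "G x t \<ge> 0" by simp
qed

end
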